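(* Let $A$ be a real $m\times n$ matrix, $\mathbf b\in\mathbb R^m$, $\mathbf c\in\mathbb R^n$ (row vector), such that the linear program $\max\mathbf c\mathbf x$ s.t. $A\mathbf x\le\mathbf b$, $\mathbf x\ge0$ has unique optimal primal and dual solutions $\mathbf x^*$ and $\mathbf y^*$. Let $\lambda=\min(\alpha_P,\alpha_D,\beta_P,\beta_D)$. Then \[ \delta(A,\mathbf b,\mathbf c)\ \ge\ \frac{\lambda^2\,\gamma}{2\max(1,\sqrt n\|A\|)\,(1+\|A\|)}. \]
   Context: The dual is $\min\mathbf y\mathbf b$ s.t. $\mathbf yA\ge\mathbf c$, $\mathbf y\ge0$. $U=\{i:x^*_i>0\}$, $V=\{j:y^*_j>0\}$, $\bar U,\bar V$ their complements. Define $\alpha_P=\min_{i\in U}x^*_i$, $\alpha_D=\min_{j\in V}y^*_j$, $\beta_P=\min_{j\in\bar V}(b_j-A_{j,:}\mathbf x^* )$, $\beta_D=\min_{i\in\bar U}(\mathbf y^*A_{:,i}-c_i)$, and $\gamma=\min_{k\in U}\mathrm{dist}(A_{V,k},\mathrm{span}(A_{V,U\setminus\{k\}}))$, where $A_{V,k}$ is column $k$ restricted to rows in $V$ and $\mathrm{span}(A_{V,U\setminus\{k\}})$ is the span of the columns indexed by $U\setminus\{k\}$ restricted to rows $V$. $\|A\|$ is the spectral norm. For a primal feasible $\mathbf x$, $U(\mathbf x)$ and $V(\mathbf x)$ are the index sets such that $\{x_i:i\notin U(\mathbf x)\}\cup\{b_j-A_{j,:}\mathbf x:j\in V(\mathbf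 x)\}$ are the $n$ smallest values among $\{x_i\}\cup\{b_j-A_{j,:}\mathbf x\}$. $\delta(A,\mathbf b,\mathbf c)$ is the supremum of those $\delta$ such that for every primal feasible $\mathbf x$, $\mathbf c\mathbf x^*-\mathbf c\mathbf x<\delta$ implies $U(\mathbf x)=U$ and $V(\mathbf x)=V$. *)

theory Defs
  imports "HOL-Analysis.Analysis"
begin

text \<open>LP: max c.x s.t. A x <= b, x >= 0; dual: min y.b s.t. y A >= c, y >= 0.
  A is an m x n real matrix, represented as real^'n^'m (rows indexed by 'm).\<close>

definition primal_feasible :: "real^'n^'m \<Rightarrow> real^'m \<Rightarrow> real^'n \<Rightarrow> bool" where
  "primal_feasible A b x \<longleftrightarrow> (\<forall>i. 0 \<le> x $ i) \<and> (\<forall>j. (A *v x) $ j \<le> b $ j)"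

definition dual_feasible :: "real^'n^'m \<Rightarrow> real^'n \<Rightarrow> real^'m \<Rightarrow> bool" where
  "dual_feasible A c y \<longleftrightarrow> (\<forall>j. 0 \<le> y $ j) \<and> (\<forall>i. c $ i \<le> (y v* A) $ i)"

definition primal_optimal :: "real^'n^'m \<Rightarrow> real^'m \<Rightarrow> real^'n \<Rightarrow> real^'n \<Rightarrow> bool" where
  "primal_optimal A b c x \<longleftrightarrow> primal_feasible A b x \<and>
     (\<forall>x'. primal_feasible A b x' \<longrightarrow> c \<bullet> x' \<le> c \<bullet> x)"

definition dual_optimal :: "real^'n^'m \<Rightarrow> real^'m \<Rightarrow> real^'n \<Rightarrow> real^'m \<Rightarrow> bool" where
  "dual_optimal A b c y \<longleftrightarrow> dual_feasible A c y \<and>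
     (\<forall>y'. dual_feasible A c y' \<longrightarrow> y \<bullet> b \<le> y' \<bullet> b)"

definition slack :: "real^'n^'m \<Rightarrow> real^'m \<Rightarrow> real^'n \<Rightarrow> 'm \<Rightarrow> real" where
  "slack A b x j = b $ j - (A *v x) $ j"

definition supp_vec :: "real^'k \<Rightarrow> 'k set" where
  "supp_vec v = {i. 0 < v $ i}"

text \<open>Minima over possibly empty sets, as extended reals (min of the empty set is +infinity).\<close>
definition alpha_P :: "real^'n \<Rightarrow> ereal" where
  "alpha_P xs = (INF i\<in>supp_vec xs. ereal (xs $ i))"

definition alpha_D :: "real^'m \<Rightarrow> ereal" where
  "alpha_D ys = (INF j\<in>supp_vec ys. ereal (ys $ j))"

definition beta_P :: "real^'n^'m \<Rightarrow> real^'m \<Rightarrow> real^'n \<Rightarrow> real^'m \<Rightarrow> ereal" where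
  "beta_P A b xs ys = (INF j\<in>- supp_vec ys. ereal (slack A b xs j))"

definition beta_D :: "real^'n^'m \<Rightarrow> real^'n \<Rightarrow> real^'n \<Rightarrow> real^'m \<Rightarrow> ereal" where
  "beta_D A c xs ys = (INF i\<in>- supp_vec xs. ereal ((ys v* A) $ i - c $ i))"

text \<open>Column k of A restricted to the rows in V, embedded in R^m by zero-padding the
  rows outside V (this does not change distances to spans of such vectors).\<close>
definition col_restr :: "real^'n^'m \<Rightarrow> 'm set \<Rightarrow> 'n \<Rightarrow> real^'m" where
  "col_restr A V k = (\<chi> j. if j \<in> V then A $ j $ k else 0)"

definition gamma :: "real^'n^'m \<Rightarrow> 'n set \<Rightarrow> 'm set \<Rightarrow> ereal" where
  "gamma A U V = (if U = {} then 0 else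
     (INF k\<in>U. ereal (infdist (col_restr A V k) (span (col_restr A V ` (U - {k}))))))"

text \<open>"U(x) = U and V(x) = V": the values x_i (i not in U) and slacks (j in V) are
  exactly the n smallest among all x_i and all slacks, i.e. there are n of them and each is
  strictly smaller than every value not selected (so the selection is unique).\<close>
definition selects_n_smallest ::
  "real^'n^'m \<Rightarrow> real^'m \<Rightarrow> real^'n \<Rightarrow> 'n set \<Rightarrow> 'm set \<Rightarrow> bool" where
  "selects_n_smallest A b x U V \<longleftrightarrow>
     card (- U) + card V = CARD('n) \<and>
     (\<forall>i\<in>- U. \<forall>i'\<in>U. x $ i < x $ i') \<and>
     (\<forall>i\<in>- U. \<forall>j'\<in>- V. x $ i < slack A b x j') \<and>
     (\<forall>j\<in>V. \<forall>i'\<in>U. slack A b x j < x $ i') \<and>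
     (\<forall>j\<in>V. \<forall>j'\<in>- V. slack A b x j < slack A b x j')"

definition delta :: "real^'n^'m \<Rightarrow> real^'m \<Rightarrow> real^'n \<Rightarrow> real^'n \<Rightarrow> real^'m \<Rightarrow> ereal" where
  "delta A b c xs ys = Sup (ereal ` {d. \<forall>x. primal_feasible A b x \<longrightarrow> c \<bullet> xs - c \<bullet> x < d \<longrightarrow>
       selects_n_smallest A b x (supp_vec xs) (supp_vec ys)})"

end

theory Submission
  imports Defs
begin


lemma strong_duality:
  fixes A :: "real^'n^'m" and b :: "real^'m" and c :: "real^'n"
    and xs :: "real^'n" and ys :: "real^'m"
  assumes po: "primal_optimal A b c xs" and dopt: "dual_optimal A b c ys"
  shows "c \<bullet> xs = ys \<bullet> b"
proof -
  define z where "z = c \<bullet> xs"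
  define Gs :: "((real^'n) \<times> real) set" where
    "Gs = range (\<lambda>j. (A$j, b$j)) \<union> range (\<lambda>i. (- axis i 1, 0)) \<union> {(0,1)}"
  define K :: "((real^'n) \<times> real) set" where
    "K = {(y v* A - s, y \<bullet> b + t) | y s t. (\<forall>j. 0 \<le> y$j) \<and> (\<forall>i. 0 \<le> s$i) \<and> 0 \<le> t}"
  have Kmem: "g \<in> K" if "\<forall>j. 0 \<le> y$j" "\<forall>i. 0 \<le> s$i" "0 \<le> t" "g = (y v* A - s, y \<bullet> b + t)" for g y s t
    unfolding K_def using that by blast
  have finG: "finite Gs" unfolding Gs_def by simp
  have GK: "Gs \<subseteq> K"
  proof
    fix g assume "g \<in> Gs"
    then consider j where "g = (A$j, b$j)" | i where "g = (- axis i 1, 0)" | "g = (0,1)"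
      unfolding Gs_def by blast
    then show "g \<in> K"
    proof cases
      case (1 j)
      have "A$j = axis j 1 v* A"
        by (simp add: vec_eq_iff vector_matrix_mult_def axis_def if_distrib[of "\<lambda>u. u * _"] cong: if_cong)
      moreover have "b$j = axis j 1 \<bullet> b" by (simp add: inner_axis')
      ultimately have "g = (axis j 1 v* A - 0, axis j 1 \<bullet> b + 0)" using 1 by simp
      then show ?thesis by (rule Kmem[rotated 3]) (auto simp: axis_def)
    next
      case (2 i)
      have "g = ((0::real^'m) v* A - axis i 1, 0 \<bullet> b + 0)" using 2
        by (simp add: vec_eq_iff vector_matrix_mult_def)
      then show ?thesis by (rule Kmem[rotated 3]) (auto simp: axis_def)
    next
      case 3
      have "g = ((0::real^'m) v* A - 0, 0 \<bullet> b + 1)" using 3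
        by (simp add: vec_eq_iff vector_matrix_mult_def)
      then show ?thesis by (rule Kmem[rotated 3]) auto
    qed
  qed
  have ccK: "convex_cone K"
    unfolding convex_cone_iff
  proof (intro conjI ballI allI impI)
    show "0 \<in> K"
      by (rule Kmem[of 0 0 0]) (auto simp: vec_eq_iff vector_matrix_mult_def zero_prod_def)
  next
    fix p q assume "p \<in> K" "q \<in> K"
    then obtain y s t y' s' t' where
      p: "p = (y v* A - s, y \<bullet> b + t)" "\<forall>j. 0 \<le> y$j" "\<forall>i. 0 \<le> s$i" "0 \<le> t" and
      q: "q = (y' v* A - s', y' \<bullet> b + t')" "\<forall>j. 0 \<le> y'$j" "\<forall>i. 0 \<le> s'$i" "0 \<le> t'"
      unfolding K_def by blast
    have "p + q = ((y + y') v* A - (s + s'), (y + y') \<bullet> b + (t + t'))"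
      using p q by (simp add: vec_eq_iff vector_matrix_mult_def algebra_simps sum.distrib inner_add_left)
    moreover have "\<forall>j. 0 \<le> (y+y')$j" "\<forall>i. 0 \<le> (s+s')$i" "0 \<le> t + t'" using p q by auto
    ultimately show "p + q \<in> K" using Kmem by blast
  next
    fix p and r :: real assume "p \<in> K" "0 \<le> r"
    then obtain y s t where
      p: "p = (y v* A - s, y \<bullet> b + t)" "\<forall>j. 0 \<le> y$j" "\<forall>i. 0 \<le> s$i" "0 \<le> t"
      unfolding K_def by blast
    have "r *\<^sub>R p = ((r *\<^sub>R y) v* A - r *\<^sub>R s, (r *\<^sub>R y) \<bullet> b + r * t)"
      using p by (simp add: vec_eq_iff vector_matrix_mult_def algebra_simps sum_distrib_left)
    moreover have "\<forall>j. 0 \<le> (r *\<^sub>R y)$j" "\<forall>i. 0 \<le> (r *\<^sub>R s)$i" "0 \<le> r * t"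
      using p \<open>0 \<le> r\<close> by auto
    ultimately show "r *\<^sub>R p \<in> K" using Kmem by blast
  qed
  define H where "H = convex_cone hull Gs"
  have HK: "H \<subseteq> K" unfolding H_def using GK ccK by (rule hull_minimal)
  have mem: "(c, z) \<in> H"
  proof (rule ccontr)
    assume nm: "(c, z) \<notin> H"
    have "convex H" "closed H" unfolding H_def
      using convex_convex_cone_hull closed_convex_cone_hull[OF finG] by auto
    from separating_hyperplane_closed_point[OF this nm]
    obtain a \<beta> where ab: "a \<bullet> (c, z) < \<beta>" "\<forall>x\<in>H. \<beta> < a \<bullet> x" by blast
    have "0 \<in> H" unfolding H_def by (rule convex_cone_hull_contains_0)
    with ab have bneg: "\<beta> < 0" by auto
    have nng: "0 \<le> a \<bullet> g" if "g \<in> Gs" for g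
    proof (rule ccontr)
      assume "\<not> 0 \<le> a \<bullet> g"
      then have neg: "a \<bullet> g < 0" by simp
      have gm: "(\<beta> / (a \<bullet> g)) *\<^sub>R g \<in> H" unfolding H_def
        using convex_cone_hull_mul[of g Gs "\<beta> / (a \<bullet> g)"] hull_inc[OF that] neg bneg
        by (simp add: divide_nonpos_neg)
      have "\<beta> < a \<bullet> ((\<beta> / (a \<bullet> g)) *\<^sub>R g)" using ab(2) gm by blast
      also have "\<dots> = \<beta>" using neg by simp
      finally show False by simp
    qed
    obtain w \<alpha> where a: "a = (w, \<alpha>)" by (cases a)
    have r1: "0 \<le> (A *v w)$j + \<alpha> * b$j" for j
      using nng[of "(A$j, b$j)"] unfolding Gs_def a
      by (simp add: matrix_vector_mult_def inner_vec_def mult.commute)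
    have r2: "w$i \<le> 0" for i
      using nng[of "(- axis i 1, 0)"] unfolding Gs_def a by (simp add: inner_axis)
    have r3: "0 \<le> \<alpha>" using nng[of "(0,1)"] unfolding Gs_def a by simp
    have r4: "w \<bullet> c + \<alpha> * z < 0" using ab bneg unfolding a by (simp add: inner_commute mult.commute)
    have pf: "primal_feasible A b xs" and popt: "\<And>x'. primal_feasible A b x' \<Longrightarrow> c \<bullet> x' \<le> c \<bullet> xs"
      using po unfolding primal_optimal_def by auto
    show False
    proof (cases "\<alpha> = 0")
      case True
      define x where "x = xs - w"
      have "primal_feasible A b x"
        unfolding primal_feasible_def x_def
      proof (intro conjI allI)
        fix i show "0 \<le> (xs - w) $ i" using pf r2[of i] unfolding primal_feasible_def by (smt (verit) vector_minus_component)
      next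
        fix j have "(A *v xs) $ j \<le> b $ j" "0 \<le> (A *v w) $ j"
          using pf r1[of j] True unfolding primal_feasible_def by auto
        then show "(A *v (xs - w)) $ j \<le> b $ j" by (simp add: matrix_vector_mult_diff_distrib)
      qed
      moreover have "c \<bullet> x > c \<bullet> xs" using r4 True unfolding x_def
        by (simp add: inner_diff_right inner_commute)
      ultimately show False using popt by fastforce
    next
      case False
      then have ap: "\<alpha> > 0" using r3 by simp
      define x where "x = (- 1 / \<alpha>) *\<^sub>R w"
      have "primal_feasible A b x"
        unfolding primal_feasible_def x_def
      proof (intro conjI allI)
        fix i show "0 \<le> ((- 1 / \<alpha>) *\<^sub>R w) $ i" using r2[of i] ap
          by (simp add: divide_nonpos_pos mult_nonpos_nonpos)
      next
        fix j
        have "(A *v ((- 1 / \<alpha>) *\<^sub>R w)) $ j = - (A *v w)$j / \<alpha>"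
          by (simp add: matrix_vector_mult_def sum_negf sum_divide_distrib)
        also have "\<dots> \<le> b $ j" using r1[of j] ap by (simp add: field_simps)
        finally show "(A *v ((- 1 / \<alpha>) *\<^sub>R w)) $ j \<le> b $ j" .
      qed
      moreover have "c \<bullet> x > c \<bullet> xs"
      proof -
        have "c \<bullet> x = - (w \<bullet> c) / \<alpha>" unfolding x_def by (simp add: inner_commute)
        moreover have "- (w \<bullet> c) / \<alpha> > z" using r4 ap by (simp add: field_simps)
        ultimately show ?thesis unfolding z_def by simp
      qed
      ultimately show False using popt by fastforce
    qed
  qed
  then have "(c, z) \<in> K" using HK by blast
  then obtain y s t where
    ys: "(c, z) = (y v* A - s, y \<bullet> b + t)" "\<forall>j. 0 \<le> y$j" "\<forall>i. 0 \<le> s$i" "0 \<le> t"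
    unfolding K_def by blast
  have "dual_feasible A c y" unfolding dual_feasible_def using ys by auto
  then have "ys \<bullet> b \<le> y \<bullet> b" using dopt unfolding dual_optimal_def by blast
  also have "\<dots> \<le> z" using ys by simp
  finally have le: "ys \<bullet> b \<le> c \<bullet> xs" unfolding z_def .
  have "c \<bullet> xs \<le> (ys v* A) \<bullet> xs"
    using dopt po unfolding dual_optimal_def dual_feasible_def primal_optimal_def primal_feasible_def
    by (auto simp: inner_vec_def intro!: sum_mono mult_right_mono)
  also have "\<dots> = ys \<bullet> (A *v xs)" by (rule dot_lmul_matrix)
  also have "\<dots> \<le> ys \<bullet> b"
    using dopt po unfolding dual_optimal_def dual_feasible_def primal_optimal_def primal_feasible_def
    by (auto simp: inner_vec_def intro!: sum_mono mult_left_mono)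
  finally show ?thesis using le by simp
qed



lemma coef_bound:
  fixes a :: "'k \<Rightarrow> 'v::real_normed_vector" and t :: "'k \<Rightarrow> real"
  assumes "finite U" "k \<in> U"
  shows "\<bar>t k\<bar> * infdist (a k) (span (a ` (U - {k}))) \<le> norm (\<Sum>l\<in>U. t l *\<^sub>R a l)"
proof (cases "t k = 0")
  case True then show ?thesis by simp
next
  case False
  define z where "z = (\<Sum>l\<in>U-{k}. t l *\<^sub>R a l)"
  have zs: "z \<in> span (a ` (U-{k}))" unfolding z_def
    by (intro span_sum span_scale span_base) auto
  have sm: "(\<Sum>l\<in>U. t l *\<^sub>R a l) = t k *\<^sub>R a k + z" unfolding z_def using assms
    by (simp add: sum.remove)
  have "infdist (a k) (span (a ` (U - {k}))) \<le> dist (a k) (- (1 / t k) *\<^sub>R z)"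
    by (rule infdist_le) (intro span_scale zs)
  also have "\<dots> = norm (a k + (1 / t k) *\<^sub>R z)" by (simp add: dist_norm)
  also have "a k + (1 / t k) *\<^sub>R z = (1 / t k) *\<^sub>R (t k *\<^sub>R a k + z)"
    using False by (simp add: algebra_simps)
  also have "norm \<dots> = norm (\<Sum>l\<in>U. t l *\<^sub>R a l) / \<bar>t k\<bar>" by (simp add: sm)
  finally have "infdist (a k) (span (a ` (U - {k}))) \<le> norm (\<Sum>l\<in>U. t l *\<^sub>R a l) / \<bar>t k\<bar>" .
  then have "infdist (a k) (span (a ` (U - {k}))) * \<bar>t k\<bar> \<le> norm (\<Sum>l\<in>U. t l *\<^sub>R a l)"
    using False by (simp add: pos_le_divide_eq)
  then show ?thesis by (simp add: mult.commute)
qed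

lemma norm_sqrt_bound:
  fixes v :: "real^'n"
  assumes "\<And>i. \<bar>v$i\<bar> \<le> K"
  shows "norm v \<le> sqrt (real CARD('n)) * K"
proof -
  have K0: "0 \<le> K" using assms[of undefined] by simp
  have "norm v \<le> norm ((\<chi> i. K) :: real^'n)"
    by (rule norm_le_componentwise_cart) (use assms K0 in auto)
  also have "\<dots> = sqrt (real CARD('n) * K^2)"
    by (simp add: norm_vec_def L2_set_def)
  also have "\<dots> = sqrt (real CARD('n)) * K" using K0 by (simp add: real_sqrt_mult)
  finally show ?thesis .
qed

lemma card_le_inj:
  fixes f :: "real^'a \<Rightarrow> real^'b"
  assumes lf: "linear f" and inj: "inj_on f {x. \<forall>i. i \<notin> X \<longrightarrow> x$i = 0}"
    and img: "\<And>x. (\<forall>i. i \<notin> X \<longrightarrow> x$i = 0) \<Longrightarrow> (\<forall>j. j \<notin> Y \<longrightarrow> f x $ j = 0)"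
  shows "card X \<le> card Y"
proof -
  define S where "S = {x::real^'a. \<forall>i. i \<notin> X \<longrightarrow> x$i = 0}"
  define T where "T = {x::real^'b. \<forall>i. i \<notin> Y \<longrightarrow> x$i = 0}"
  have "subspace S" unfolding S_def subspace_def by auto
  then have spS: "span S = S" by (simp add: span_eq_iff)
  have e0: "dim (f ` S) = dim S"
    by (rule dim_image_eq[OF lf], subst spS, unfold S_def, rule inj)
  have "vec.dim S = card X" unfolding S_def by (rule dim_substandard_cart)
  then have e2: "dim S = card X" by (simp add: dim_vec_eq)
  have "vec.dim T = card Y" unfolding T_def by (rule dim_substandard_cart)
  then have e3: "dim T = card Y" by (simp add: dim_vec_eq)
  have "f ` S \<subseteq> T" using img unfolding S_def T_def by auto
  then have "dim (f ` S) \<le> dim T" by (rule dim_subset)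
  then show ?thesis using e0 e2 e3 by simp
qed

lemma mask_sum:
  fixes A :: "real^'n^'m" and t :: "real^'n"
  assumes "\<forall>i. i \<notin> U \<longrightarrow> t$i = 0"
  shows "(\<chi> j. if j \<in> V then (A *v t)$j else 0) = (\<Sum>k\<in>U. t$k *\<^sub>R col_restr A V k)"
proof -
  have "(A *v t)$j = (\<Sum>k\<in>U. A$j$k * t$k)" for j
  proof -
    have "(A *v t)$j = (\<Sum>k\<in>UNIV. A$j$k * t$k)" by (simp add: matrix_vector_mult_def)
    also have "\<dots> = (\<Sum>k\<in>U. A$j$k * t$k)"
      by (rule sum.mono_neutral_right) (use assms in auto)
    finally show ?thesis .
  qed
  then show ?thesis
    by (simp add: vec_eq_iff col_restr_def sum_component mult.commute)
qed



lemma card_UV: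
  fixes A :: "real^'n^'m" and b :: "real^'m" and c :: "real^'n"
    and xs :: "real^'n" and ys :: "real^'m"
  assumes po: "primal_optimal A b c xs"
    and dopt: "dual_optimal A b c ys"
    and du: "\<forall>y. dual_optimal A b c y \<longrightarrow> y = ys"
    and L0: "0 < L" and G0: "0 < G"
    and Ud: "U = supp_vec xs" and Vd: "V = supp_vec ys"
    and hyV: "\<forall>j\<in>V. L \<le> ys$j" and hrU: "\<forall>i. i \<notin> U \<longrightarrow> L \<le> (ys v* A)$i - c$i"
    and hG: "\<forall>k\<in>U. G \<le> infdist (col_restr A V k) (span (col_restr A V ` (U - {k})))"
    and csV: "\<forall>j\<in>V. slack A b xs j = 0"
  shows "card U = card V"
proof -
  have pf: "primal_feasible A b xs" using po unfolding primal_optimal_def by simp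
  have df: "dual_feasible A c ys" using dopt unfolding dual_optimal_def by simp
  have xsN: "xs$i = 0" if "i \<notin> U" for i
    using pf that unfolding Ud supp_vec_def primal_feasible_def by (metis mem_Collect_eq order_le_less)
  have ysN: "ys$j = 0" if "j \<notin> V" for j
    using df that unfolding Vd supp_vec_def dual_feasible_def by (metis mem_Collect_eq order_le_less)
  define f1 :: "real^'n \<Rightarrow> real^'m" where "f1 t = (\<chi> j. if j \<in> V then (A *v t)$j else 0)" for t
  have lf1: "linear f1"
    by (rule linearI) (simp_all add: f1_def vec_eq_iff matrix_vector_right_distrib matrix_vector_mult_scaleR)
  have "card U \<le> card V"
  proof (rule card_le_inj[OF lf1])
    show "inj_on f1 {x. \<forall>i. i \<notin> U \<longrightarrow> x $ i = 0}"
    proof (rule inj_onI)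
      fix x y assume x: "x \<in> {x. \<forall>i. i \<notin> U \<longrightarrow> x $ i = 0}" and y: "y \<in> {x. \<forall>i. i \<notin> U \<longrightarrow> x $ i = 0}"
        and fxy: "f1 x = f1 y"
      define t where "t = x - y"
      have tS: "\<forall>i. i \<notin> U \<longrightarrow> t$i = 0" using x y unfolding t_def by auto
      have "f1 t = 0" unfolding t_def using fxy linear_diff[OF lf1] by simp
      then have s0: "(\<Sum>k\<in>U. t$k *\<^sub>R col_restr A V k) = 0"
        using mask_sum[OF tS, of V A] unfolding f1_def by simp
      have "t$k = 0" for k
      proof (cases "k \<in> U")
        case True
        have "\<bar>t$k\<bar> * infdist (col_restr A V k) (span (col_restr A V ` (U - {k}))) \<le> 0"
          using coef_bound[of U k "\<lambda>k. t$k" "col_restr A V"] True s0 by simp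
        moreover have "\<bar>t$k\<bar> * G \<le> \<bar>t$k\<bar> * infdist (col_restr A V k) (span (col_restr A V ` (U - {k})))"
          using hG True by (simp add: mult_left_mono)
        ultimately have "\<bar>t$k\<bar> * G \<le> 0" by linarith
        then show ?thesis using G0 by (simp add: mult_le_0_iff)
      qed (use tS in auto)
      then show "x = y" unfolding t_def by (simp add: vec_eq_iff)
    qed
  qed (auto simp: f1_def)
  moreover
  define f2 :: "real^'m \<Rightarrow> real^'n" where "f2 u = (\<chi> i. if i \<in> U then (u v* A)$i else 0)" for u
  have vmlin: "(p + r *\<^sub>R q) v* A = p v* A + r *\<^sub>R (q v* A)" for p q :: "real^'m" and r
    by (simp add: vec_eq_iff vector_matrix_mult_def sum.distrib algebra_simps sum_distrib_left)
  have lf2: "linear f2"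
  proof (rule linearI)
    fix p q :: "real^'m" and r :: real
    show "f2 (p + q) = f2 p + f2 q" using vmlin[of p 1 q] by (simp add: f2_def vec_eq_iff)
    show "f2 (r *\<^sub>R p) = r *\<^sub>R f2 p" using vmlin[of 0 r p] by (simp add: f2_def vec_eq_iff)
  qed
  have "card V \<le> card U"
  proof (rule card_le_inj[OF lf2])
    show "inj_on f2 {x. \<forall>i. i \<notin> V \<longrightarrow> x $ i = 0}"
    proof (rule inj_onI, rule ccontr)
      fix x y assume x: "x \<in> {x. \<forall>i. i \<notin> V \<longrightarrow> x $ i = 0}" and y: "y \<in> {x. \<forall>i. i \<notin> V \<longrightarrow> x $ i = 0}"
        and fxy: "f2 x = f2 y" and xy: "x \<noteq> y"
      define u where "u = x - y"
      have uS: "\<forall>j. j \<notin> V \<longrightarrow> u$j = 0" using x y unfolding u_def by auto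
      have u0: "u \<noteq> 0" using xy unfolding u_def by simp
      have "f2 u = 0" unfolding u_def using fxy linear_diff[OF lf2] by simp
      then have uA: "(u v* A)$i = 0" if "i \<in> U" for i
        using that unfolding f2_def by (simp add: vec_eq_iff) (metis)
      have ub: "u \<bullet> b = 0"
      proof -
        have "u \<bullet> b = u \<bullet> (A *v xs)"
          unfolding inner_vec_def
        proof (rule sum.cong)
          fix j show "u $ j \<bullet> b $ j = u $ j \<bullet> (A *v xs) $ j"
            using csV uS unfolding slack_def by (cases "j \<in> V") auto
        qed simp
        also have "\<dots> = (u v* A) \<bullet> xs" by (simp add: dot_lmul_matrix)
        also have "\<dots> = 0" unfolding inner_vec_def
          by (rule sum.neutral) (metis uA xsN inner_zero_left inner_zero_right)
        finally show ?thesis .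
      qed
      define M where "M = 1 + (\<Sum>j\<in>UNIV. \<bar>u$j\<bar>) + (\<Sum>i\<in>UNIV. \<bar>(u v* A)$i\<bar>)"
      have M1: "1 \<le> M" unfolding M_def by (simp add: sum_nonneg add_increasing2)
      define \<epsilon> where "\<epsilon> = L / M"
      have ep: "0 < \<epsilon>" unfolding \<epsilon>_def using L0 M1 by simp
      have uM: "\<bar>u$j\<bar> \<le> M" for j
      proof -
        have "\<bar>u$j\<bar> \<le> (\<Sum>j\<in>UNIV. \<bar>u$j\<bar>)" by (rule member_le_sum) auto
        then show ?thesis unfolding M_def by (smt (verit) sum_nonneg abs_ge_zero)
      qed
      have uAM: "\<bar>(u v* A)$i\<bar> \<le> M" for i
      proof -
        have "\<bar>(u v* A)$i\<bar> \<le> (\<Sum>i\<in>UNIV. \<bar>(u v* A)$i\<bar>)" by (rule member_le_sum) auto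
        then show ?thesis unfolding M_def by (smt (verit) sum_nonneg abs_ge_zero)
      qed
      have eb: "\<epsilon> * \<bar>z\<bar> \<le> L" if "\<bar>z\<bar> \<le> M" for z
      proof -
        have "\<epsilon> * \<bar>z\<bar> \<le> \<epsilon> * M" using that ep by (simp add: mult_left_mono)
        also have "\<dots> = L" unfolding \<epsilon>_def using M1 by simp
        finally show ?thesis .
      qed
      define y' where "y' = ys + \<epsilon> *\<^sub>R u"
      have y'A: "(y' v* A) = ys v* A + \<epsilon> *\<^sub>R (u v* A)" unfolding y'_def by (rule vmlin)
      have dfy: "dual_feasible A c y'"
        unfolding dual_feasible_def
      proof (intro conjI allI)
        fix j
        show "0 \<le> y'$j"
        proof (cases "j \<in> V")
          case True
          then have "L \<le> ys$j" using hyV by auto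
          moreover have "\<epsilon> * \<bar>u$j\<bar> \<le> L" using eb uM by blast
          ultimately show ?thesis unfolding y'_def
            by simp (smt (verit) abs_ge_minus_self mult_minus_right mult_left_mono ep)
        next
          case False
          then show ?thesis using uS df unfolding y'_def dual_feasible_def by simp
        qed
      next
        fix i
        show "c$i \<le> (y' v* A)$i"
        proof (cases "i \<in> U")
          case True
          then show ?thesis using uA df unfolding y'A dual_feasible_def by simp
        next
          case False
          then have "L \<le> (ys v* A)$i - c$i" using hrU by auto
          moreover have "\<epsilon> * \<bar>(u v* A)$i\<bar> \<le> L" using eb uAM by blast
          ultimately show ?thesis unfolding y'A
            by simp (smt (verit) abs_ge_minus_self mult_minus_right mult_left_mono ep)
        qed
      qed
      have "y' \<bullet> b = ys \<bullet> b" unfolding y'_def using ub by (simp add: inner_add_left)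
      then have "dual_optimal A b c y'"
        using dfy dopt unfolding dual_optimal_def by simp
      then have "y' = ys" using du by blast
      then have "\<epsilon> *\<^sub>R u = 0" unfolding y'_def by simp
      then show False using ep u0 by simp
    qed
  qed (auto simp: f2_def)
  ultimately show ?thesis by simp
qed



lemma core:
  fixes A :: "real^'n^'m" and b :: "real^'m" and c :: "real^'n"
    and xs :: "real^'n" and ys :: "real^'m"
  assumes po: "primal_optimal A b c xs"
    and dopt: "dual_optimal A b c ys"
    and L0: "0 < L" and G0: "0 < G"
    and Ud: "U = supp_vec xs" and Vd: "V = supp_vec ys" and Une: "U \<noteq> {}"
    and hxU: "\<forall>i\<in>U. L \<le> xs$i"
    and hsV: "\<forall>j. j \<notin> V \<longrightarrow> L \<le> slack A b xs j"
    and hyV: "\<forall>j\<in>V. L \<le> ys$j" and hrU: "\<forall>i. i \<notin> U \<longrightarrow> L \<le> (ys v* A)$i - c$i"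
    and hG: "\<forall>k\<in>U. G \<le> infdist (col_restr A V k) (span (col_restr A V ` (U - {k})))"
    and du: "\<forall>y. dual_optimal A b c y \<longrightarrow> y = ys"
    and xf: "primal_feasible A b x"
    and gap: "c \<bullet> xs - c \<bullet> x < L^2 * G / (2 * max 1 (sqrt (real CARD('n)) * onorm (\<lambda>x. A *v x)) * (1 + onorm (\<lambda>x. A *v x)))"
  shows "selects_n_smallest A b x U V"
proof -
  define nA where "nA = onorm (\<lambda>x. A *v x)"
  have nA0: "0 \<le> nA" unfolding nA_def by (rule onorm_pos_le) simp
  have onA: "norm (A *v v) \<le> nA * norm v" for v
    unfolding nA_def by (rule onorm) simp
  define r where "r = sqrt (real CARD('n))"
  have r1: "1 \<le> r" unfolding r_def by simp
  define m1 where "m1 = max 1 nA"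
  define P where "P = 2 * max 1 (r * nA) * (1 + nA)"
  have gap': "c \<bullet> xs - c \<bullet> x < L^2 * G / P" using gap unfolding P_def r_def nA_def .
  have P0: "0 < P" unfolding P_def using nA0 by (simp add: add_pos_nonneg)
  have pf: "primal_feasible A b xs" and popt: "\<And>x'. primal_feasible A b x' \<Longrightarrow> c \<bullet> x' \<le> c \<bullet> xs"
    using po unfolding primal_optimal_def by auto
  have df: "dual_feasible A c ys" using dopt unfolding dual_optimal_def by simp
  have SD: "c \<bullet> xs = ys \<bullet> b" by (rule strong_duality[OF po dopt])
  have xsN: "xs$i = 0" if "i \<notin> U" for i
    using pf that unfolding Ud supp_vec_def primal_feasible_def by (metis mem_Collect_eq order_le_less)
  have slack0: "0 \<le> slack A b x' j" if "primal_feasible A b x'" for x' j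
    using that unfolding primal_feasible_def slack_def by simp
  have gapb: "L * ((\<Sum>j\<in>V. slack A b x' j) + (\<Sum>i\<in>-U. x'$i)) \<le> c \<bullet> xs - c \<bullet> x'"
    if fx: "primal_feasible A b x'" for x'
  proof -
    have x0: "0 \<le> x'$i" for i using fx unfolding primal_feasible_def by simp
    have "ys \<bullet> b - c \<bullet> x' = ys \<bullet> (b - A *v x') + (ys v* A - c) \<bullet> x'"
      by (simp add: inner_diff_right inner_diff_left dot_lmul_matrix)
    also have "\<dots> = (\<Sum>j\<in>UNIV. ys$j * slack A b x' j) + (\<Sum>i\<in>UNIV. ((ys v* A)$i - c$i) * x'$i)"
      by (simp add: inner_vec_def slack_def)
    finally have id: "ys \<bullet> b - c \<bullet> x' = (\<Sum>j\<in>UNIV. ys$j * slack A b x' j) + (\<Sum>i\<in>UNIV. ((ys v* A)$i - c$i) * x'$i)" .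
    have t1: "L * (\<Sum>j\<in>V. slack A b x' j) \<le> (\<Sum>j\<in>UNIV. ys$j * slack A b x' j)"
    proof -
      have "L * (\<Sum>j\<in>V. slack A b x' j) = (\<Sum>j\<in>V. L * slack A b x' j)" by (simp add: sum_distrib_left)
      also have "\<dots> \<le> (\<Sum>j\<in>V. ys$j * slack A b x' j)"
        by (rule sum_mono) (use hyV slack0[OF fx] in \<open>simp add: mult_right_mono\<close>)
      also have "\<dots> \<le> (\<Sum>j\<in>UNIV. ys$j * slack A b x' j)"
        by (rule sum_mono2) (use df slack0[OF fx] in \<open>auto simp: dual_feasible_def\<close>)
      finally show ?thesis .
    qed
    have t2: "L * (\<Sum>i\<in>-U. x'$i) \<le> (\<Sum>i\<in>UNIV. ((ys v* A)$i - c$i) * x'$i)"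
    proof -
      have "L * (\<Sum>i\<in>-U. x'$i) = (\<Sum>i\<in>-U. L * x'$i)" by (simp add: sum_distrib_left)
      also have "\<dots> \<le> (\<Sum>i\<in>-U. ((ys v* A)$i - c$i) * x'$i)"
        by (rule sum_mono) (use hrU x0 in \<open>simp add: mult_right_mono\<close>)
      also have "\<dots> \<le> (\<Sum>i\<in>UNIV. ((ys v* A)$i - c$i) * x'$i)"
        by (rule sum_mono2) (use df x0 in \<open>auto simp: dual_feasible_def\<close>)
      finally show ?thesis .
    qed
    show ?thesis using id t1 t2 SD by (simp add: distrib_left)
  qed
  have csV: "slack A b xs j = 0" if "j \<in> V" for j
  proof -
    have "L * ((\<Sum>j\<in>V. slack A b xs j) + (\<Sum>i\<in>-U. xs$i)) \<le> 0" using gapb[OF pf] by simp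
    moreover have "(\<Sum>i\<in>-U. xs$i) = 0" using xsN by simp
    ultimately have "(\<Sum>j\<in>V. slack A b xs j) \<le> 0" using L0 by (simp add: mult_le_0_iff)
    then have "(\<Sum>j\<in>V. slack A b xs j) = 0" using slack0[OF pf] by (simp add: antisym sum_nonneg)
    then show ?thesis using slack0[OF pf] that by (simp add: sum_nonneg_eq_0_iff)
  qed

  have cardUV: "card U = card V"
    by (rule card_UV[OF po dopt du L0 G0 Ud Vd hyV hrU hG]) (use csV in blast)
  have x0: "0 \<le> x$i" for i using xf unfolding primal_feasible_def by simp
  define s where "s j = slack A b x j" for j
  have s0: "0 \<le> s j" for j unfolding s_def using slack0[OF xf] .
  define g where "g = c \<bullet> xs - c \<bullet> x"
  define SV where "SV = (\<Sum>j\<in>V. s j)"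
  define SN where "SN = (\<Sum>i\<in>-U. x$i)"
  have SV0: "0 \<le> SV" unfolding SV_def by (simp add: s0 sum_nonneg)
  have SN0: "0 \<le> SN" unfolding SN_def by (simp add: x0 sum_nonneg)
  define e where "e = g / L"
  have gb: "L * (SV + SN) \<le> g" using gapb[OF xf] unfolding g_def SV_def SN_def s_def .
  have SVe: "SV + SN \<le> e" unfolding e_def using gb L0 by (simp add: pos_le_divide_eq mult.commute)
  have e0: "0 \<le> e" using SVe SV0 SN0 by simp
  define dU :: "real^'n" where "dU = (\<chi> i. if i \<in> U then x$i - xs$i else 0)"
  define xN :: "real^'n" where "xN = (\<chi> i. if i \<in> U then 0 else x$i)"
  have dx: "x = xs + (dU + xN)" unfolding dU_def xN_def
    by (simp add: vec_eq_iff xsN)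
  have Ax: "A *v x = A *v xs + A *v (dU + xN)"
    by (subst dx) (simp add: matrix_vector_right_distrib)
  define w :: "real^'m" where "w = (\<chi> j. if j \<in> V then (A *v dU)$j else 0)"
  define w1 :: "real^'m" where "w1 = (\<chi> j. if j \<in> V then s j else 0)"
  define w2 :: "real^'m" where "w2 = (\<chi> j. if j \<in> V then (A *v xN)$j else 0)"
  have wdec: "w = - w1 - w2"
  proof -
    have "(A *v dU)$j = - s j - (A *v xN)$j" if "j \<in> V" for j
      using Ax csV[OF that] unfolding s_def slack_def
      by (simp add: vec_eq_iff matrix_vector_right_distrib)
    then show ?thesis unfolding w_def w1_def w2_def by (simp add: vec_eq_iff)
  qed
  have nw1: "norm w1 \<le> SV"
  proof -
    have "norm w1 \<le> (\<Sum>j\<in>UNIV. \<bar>w1$j\<bar>)" by (rule norm_le_l1_cart)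
    also have "\<dots> = (\<Sum>j\<in>UNIV. if j \<in> V then s j else 0)"
      unfolding w1_def by (rule sum.cong) (use s0 in auto)
    also have "\<dots> = SV" unfolding SV_def by (simp add: sum.inter_restrict[symmetric])
    finally show ?thesis .
  qed
  have nxN: "norm xN \<le> SN"
  proof -
    have "norm xN \<le> (\<Sum>i\<in>UNIV. \<bar>xN$i\<bar>)" by (rule norm_le_l1_cart)
    also have "\<dots> = (\<Sum>i\<in>UNIV. if i \<in> -U then x$i else 0)"
      unfolding xN_def by (rule sum.cong) (use x0 in auto)
    also have "\<dots> = SN" unfolding SN_def using sum.inter_restrict[of UNIV "\<lambda>i. x$i" "-U"] by simp
    finally show ?thesis .
  qed
  have nw2: "norm w2 \<le> nA * SN"
  proof -
    have "norm w2 \<le> norm (A *v xN)"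
      by (rule norm_le_componentwise_cart) (simp add: w2_def)
    also have "\<dots> \<le> nA * norm xN" by (rule onA)
    also have "\<dots> \<le> nA * SN" using nxN nA0 by (simp add: mult_left_mono)
    finally show ?thesis .
  qed
  have m1: "1 \<le> m1" "nA \<le> m1" unfolding m1_def by auto
  have nw: "norm w \<le> m1 * e"
  proof -
    have "norm w \<le> norm w1 + norm w2" unfolding wdec
      by (metis norm_minus_cancel norm_triangle_ineq4 diff_conv_add_uminus minus_diff_eq add.commute)
    also have "\<dots> \<le> SV + nA * SN" using nw1 nw2 by simp
    also have "\<dots> \<le> m1 * SV + m1 * SN"
      using m1 SV0 SN0 by (intro add_mono mult_right_mono) (auto simp: mult_le_cancel_right1)
    also have "\<dots> \<le> m1 * e" using SVe m1 by (simp add: distrib_left[symmetric] mult_left_mono)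
    finally show ?thesis .
  qed
  have dUS: "\<forall>i. i \<notin> U \<longrightarrow> dU$i = 0" unfolding dU_def by simp
  have wsum: "w = (\<Sum>k\<in>U. dU$k *\<^sub>R col_restr A V k)"
    unfolding w_def by (rule mask_sum[OF dUS])
  define K where "K = m1 * e / G"
  have K0: "0 \<le> K" unfolding K_def using m1 e0 G0 by simp
  have dUk: "\<bar>dU$k\<bar> \<le> K" for k
  proof (cases "k \<in> U")
    case True
    have "\<bar>dU$k\<bar> * infdist (col_restr A V k) (span (col_restr A V ` (U - {k}))) \<le> norm w"
      unfolding wsum using coef_bound[of U k "\<lambda>k. dU$k" "col_restr A V"] True by simp
    moreover have "\<bar>dU$k\<bar> * G \<le> \<bar>dU$k\<bar> * infdist (col_restr A V k) (span (col_restr A V ` (U - {k})))"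
      using hG True by (simp add: mult_left_mono)
    ultimately have "\<bar>dU$k\<bar> * G \<le> m1 * e" using nw by linarith
    then show ?thesis unfolding K_def using G0 by (simp add: pos_le_divide_eq)
  next
    case False then show ?thesis using dUS K0 by simp
  qed
  have ndU: "norm dU \<le> r * K" unfolding r_def by (rule norm_sqrt_bound) (rule dUk)
  have GnA: "G \<le> nA"
  proof -
    obtain k0 where k0: "k0 \<in> U" using Une by blast
    have "G \<le> infdist (col_restr A V k0) (span (col_restr A V ` (U - {k0})))" using hG k0 by blast
    also have "\<dots> \<le> dist (col_restr A V k0) 0" by (rule infdist_le) (rule span_zero)
    also have "\<dots> = norm (col_restr A V k0)" by simp
    also have "\<dots> \<le> norm (A *v axis k0 1)"
    proof (rule norm_le_componentwise_cart)
      fix j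
      have "(A *v axis k0 1)$j = A$j$k0"
        by (simp add: matrix_vector_mult_def axis_def if_distrib[of "\<lambda>u. _ * u"] cong: if_cong)
      then show "norm (col_restr A V k0 $ j) \<le> norm ((A *v axis k0 1) $ j)"
        by (simp add: col_restr_def)
    qed
    also have "\<dots> \<le> nA * norm (axis k0 (1::real))" by (rule onA)
    also have "\<dots> = nA" by simp
    finally show ?thesis .
  qed
  have eP: "e * P < L * G"
  proof -
    have "g < L^2 * G / P" using gap' unfolding g_def .
    then have "g * P < L^2 * G" using P0 by (simp add: pos_less_divide_eq)
    then have "(g / L) * P < L * G" using L0 by (simp add: power2_eq_square field_simps)
    then show ?thesis unfolding e_def .
  qed
  define Mx where "Mx = max 1 (r * nA)"
  have Mx1: "1 \<le> Mx" and rMx: "r * nA \<le> Mx" unfolding Mx_def by auto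
  have nAr: "nA \<le> r * nA" using r1 nA0 by (simp add: mult_le_cancel_right1)
  have nAMx: "nA \<le> Mx" using nAr rMx by linarith
  have m1Mx: "m1 \<le> Mx" unfolding m1_def using Mx1 nAMx by simp
  have m1n: "m1 \<le> 1 + nA" unfolding m1_def using nA0 by simp
  have PM: "P = 2 * Mx * (1 + nA)" unfolding P_def Mx_def ..
  have MxnA: "Mx \<le> Mx * (1 + nA)" using Mx1 nA0 by (simp add: mult_le_cancel_left1)
  have ar1: "G + m1 \<le> P"
    unfolding PM using GnA nAMx m1Mx MxnA by linarith
  have ar2: "G + nA * r * m1 + nA * G \<le> P"
  proof -
    have a: "(r * nA) * m1 \<le> Mx * (1 + nA)"
      by (rule mult_mono) (use rMx m1n Mx1 m1 in auto)
    have b: "nA * G \<le> nA * nA" using GnA nA0 by (simp add: mult_left_mono)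
    have c: "nA * (1 + nA) \<le> Mx * (1 + nA)" using nAMx nA0 by (simp add: mult_right_mono)
    show ?thesis unfolding PM using a b c GnA by (simp add: algebra_simps)
  qed
  have ineq1: "e + K < L"
  proof -
    have "(e + K) * G = e * (G + m1)" unfolding K_def using G0 by (simp add: field_simps)
    also have "\<dots> \<le> e * P" using ar1 e0 by (simp add: mult_left_mono)
    also have "\<dots> < L * G" by (rule eP)
    finally show ?thesis using G0 by simp
  qed
  have ineq2: "e + nA * (r * K + e) < L"
  proof -
    have "(e + nA * (r * K + e)) * G = e * (G + nA * r * m1 + nA * G)" unfolding K_def using G0
      by (simp add: field_simps)
    also have "\<dots> \<le> e * P" using ar2 e0 by (simp add: mult_left_mono)
    also have "\<dots> < L * G" by (rule eP)
    finally show ?thesis using G0 by simp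
  qed
  have smallx: "x$i \<le> e" if "i \<notin> U" for i
  proof -
    have "x$i \<le> SN" unfolding SN_def by (rule member_le_sum) (use that x0 in auto)
    then show ?thesis using SVe SV0 by simp
  qed
  have smalls: "s j \<le> e" if "j \<in> V" for j
  proof -
    have "s j \<le> SV" unfolding SV_def by (rule member_le_sum) (use that s0 in auto)
    then show ?thesis using SVe SN0 by simp
  qed
  have bigx: "L - K \<le> x$i" if "i \<in> U" for i
  proof -
    have "x$i = xs$i + dU$i" using that unfolding dU_def by simp
    then show ?thesis using dUk[of i] hxU that by (smt (verit))
  qed
  have bigs: "L - nA * (r * K + e) \<le> s j" if "j \<notin> V" for j
  proof -
    have "s j = slack A b xs j - (A *v (dU + xN))$j" unfolding s_def slack_def Ax by simp
    moreover have "\<bar>(A *v (dU + xN))$j\<bar> \<le> nA * (r * K + e)"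
    proof -
      have "\<bar>(A *v (dU + xN))$j\<bar> \<le> norm (A *v (dU + xN))" by (rule component_le_norm_cart)
      also have "\<dots> \<le> nA * norm (dU + xN)" by (rule onA)
      also have "\<dots> \<le> nA * (norm dU + norm xN)" using nA0 by (simp add: mult_left_mono norm_triangle_ineq)
      also have "\<dots> \<le> nA * (r * K + e)" using nA0 ndU nxN SVe SV0 by (intro mult_left_mono) auto
      finally show ?thesis .
    qed
    ultimately show ?thesis using hsV that by (smt (verit))
  qed
  show ?thesis unfolding selects_n_smallest_def
  proof (intro conjI ballI)
    show "card (- U) + card V = CARD('n)"
    proof -
      have "card (- U) + card U = CARD('n)"
        using card_Un_disjoint[of "-U" U] by (simp add: Un_commute)
      then show ?thesis using cardUV by simp
    qed
  next
    fix i i' assume "i \<in> - U" "i' \<in> U"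
    then show "x $ i < x $ i'" using smallx bigx ineq1 by force
  next
    fix i j' assume "i \<in> - U" "j' \<in> - V"
    then show "x $ i < slack A b x j'" using smallx bigs ineq2 unfolding s_def by force
  next
    fix j i' assume "j \<in> V" "i' \<in> U"
    then show "slack A b x j < x $ i'" using smalls bigx ineq1 unfolding s_def by force
  next
    fix j j' assume "j \<in> V" "j' \<in> - V"
    then show "slack A b x j < slack A b x j'" using smalls bigs ineq2 unfolding s_def by force
  qed
qed


theorem mainTheorem4:
  fixes A :: "real^'n^'m" and b :: "real^'m" and c :: "real^'n"
    and xs :: "real^'n" and ys :: "real^'m"
  assumes "primal_optimal A b c xs"
    and "\<forall>x. primal_optimal A b c x \<longrightarrow> x = xs"
    and "dual_optimal A b c ys"
    and "\<forall>y. dual_optimal A b c y \<longrightarrow> y = ys"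
  shows "delta A b c xs ys \<ge>
    (let lam = min (min (alpha_P xs) (alpha_D ys)) (min (beta_P A b xs ys) (beta_D A c xs ys));
         nA = onorm (\<lambda>x. A *v x)
     in lam ^ 2 * gamma A (supp_vec xs) (supp_vec ys)
          / ereal (2 * max 1 (sqrt (real CARD('n)) * nA) * (1 + nA)))"
proof -
  note po = assms(1) and dopt = assms(3) and du = assms(4)
  define U where "U = supp_vec xs"
  define V where "V = supp_vec ys"
  define lam where "lam = min (min (alpha_P xs) (alpha_D ys)) (min (beta_P A b xs ys) (beta_D A c xs ys))"
  define gam where "gam = gamma A U V"
  define P where "P = 2 * max 1 (sqrt (real CARD('n)) * onorm (\<lambda>x. A *v x)) * (1 + onorm (\<lambda>x. A *v x))"
  have nA0: "0 \<le> onorm (\<lambda>x. A *v x)" by (rule onorm_pos_le) simp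
  have P0: "0 < P" unfolding P_def using nA0 by (simp add: add_pos_nonneg)
  have pf: "primal_feasible A b xs" and popt: "\<And>x'. primal_feasible A b x' \<Longrightarrow> c \<bullet> x' \<le> c \<bullet> xs"
    using po unfolding primal_optimal_def by auto
  have df: "dual_feasible A c ys" using dopt unfolding dual_optimal_def by simp
  have D: "ereal d \<le> delta A b c xs ys"
    if "\<forall>x. primal_feasible A b x \<longrightarrow> c \<bullet> xs - c \<bullet> x < d \<longrightarrow> selects_n_smallest A b x U V" for d
    unfolding delta_def by (rule Sup_upper) (use that in \<open>auto simp: U_def V_def\<close>)
  have D0: "0 \<le> delta A b c xs ys"
    using D[of 0] popt by (simp add: zero_ereal_def) (smt (verit) popt)
  have goal: "lam ^ 2 * gam / ereal P \<le> delta A b c xs ys"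
  proof (cases "lam ^ 2 * gam / ereal P \<le> 0")
    case True then show ?thesis using D0 by (rule order_trans)
  next
    case False
    then have Rpos: "0 < lam ^ 2 * gam / ereal P" by simp
    have Une: "U \<noteq> {}"
    proof
      assume "U = {}"
      then have "gam = 0" unfolding gam_def gamma_def by simp
      then show False using Rpos by simp
    qed
    have gle: "gam \<le> ereal (infdist (col_restr A V k) (span (col_restr A V ` (U - {k}))))" if "k \<in> U" for k
    proof -
      have "gam = (INF k\<in>U. ereal (infdist (col_restr A V k) (span (col_restr A V ` (U - {k})))))"
        unfolding gam_def gamma_def using Une by simp
      then show ?thesis using INF_lower[OF that] by simp
    qed
    have g0: "0 \<le> gam"
      unfolding gam_def gamma_def using Une by (simp add: INF_greatest infdist_nonneg)
    obtain k0 where k0: "k0 \<in> U" using Une by blast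
    obtain G where G: "gam = ereal G"
      using gle[OF k0] g0 by (cases gam) auto
    have G0: "0 \<le> G" using g0 G by simp
    have lxU: "lam \<le> ereal (xs$i)" if "i \<in> U" for i
    proof -
      have "alpha_P xs \<le> ereal (xs$i)" unfolding alpha_P_def using that U_def by (auto intro!: INF_lower)
      then show ?thesis unfolding lam_def by (auto simp: min_le_iff_disj)
    qed
    have lyV: "lam \<le> ereal (ys$j)" if "j \<in> V" for j
    proof -
      have "alpha_D ys \<le> ereal (ys$j)" unfolding alpha_D_def using that V_def by (auto intro!: INF_lower)
      then show ?thesis unfolding lam_def by (auto simp: min_le_iff_disj)
    qed
    have lsV: "lam \<le> ereal (slack A b xs j)" if "j \<notin> V" for j
    proof -
      have "beta_P A b xs ys \<le> ereal (slack A b xs j)" unfolding beta_P_def using that V_def by (auto intro!: INF_lower)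
      then show ?thesis unfolding lam_def by (auto simp: min_le_iff_disj)
    qed
    have lrU: "lam \<le> ereal ((ys v* A)$i - c$i)" if "i \<notin> U" for i
    proof -
      have "beta_D A c xs ys \<le> ereal ((ys v* A)$i - c$i)" unfolding beta_D_def using that U_def by (auto intro!: INF_lower)
      then show ?thesis unfolding lam_def by (auto simp: min_le_iff_disj)
    qed
    have l0: "0 \<le> lam"
    proof -
      have "0 \<le> alpha_P xs" unfolding alpha_P_def supp_vec_def by (rule INF_greatest) simp
      moreover have "0 \<le> alpha_D ys" unfolding alpha_D_def supp_vec_def by (rule INF_greatest) simp
      moreover have "0 \<le> beta_P A b xs ys" unfolding beta_P_def
        by (rule INF_greatest) (use pf in \<open>simp add: primal_feasible_def slack_def\<close>)
      moreover have "0 \<le> beta_D A c xs ys" unfolding beta_D_def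
        by (rule INF_greatest) (use df in \<open>simp add: dual_feasible_def\<close>)
      ultimately show ?thesis unfolding lam_def by simp
    qed
    obtain L where L: "lam = ereal L"
      using lxU[OF k0] l0 by (cases lam) auto
    have L0': "0 \<le> L" using l0 L by simp
    have R: "lam ^ 2 * gam / ereal P = ereal (L^2 * G / P)" using L G P0 by simp
    have "0 < L^2 * G / P" using Rpos R by simp
    then have LG: "0 < L^2 * G" using P0 by (simp add: zero_less_divide_iff)
    then have L0: "0 < L" and GG0: "0 < G" using L0' G0
      by (auto simp: zero_less_mult_iff)
    have hxU: "\<forall>i\<in>U. L \<le> xs$i" using lxU L by simp
    have hyV: "\<forall>j\<in>V. L \<le> ys$j" using lyV L by simp
    have hsV: "\<forall>j. j \<notin> V \<longrightarrow> L \<le> slack A b xs j" using lsV L by simp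
    have hrU: "\<forall>i. i \<notin> U \<longrightarrow> L \<le> (ys v* A)$i - c$i" using lrU L by simp
    have hG: "\<forall>k\<in>U. G \<le> infdist (col_restr A V k) (span (col_restr A V ` (U - {k})))"
      using gle G by simp
    have "ereal (L^2 * G / P) \<le> delta A b c xs ys"
    proof (rule D, intro allI impI)
      fix x assume xf: "primal_feasible A b x" and gp: "c \<bullet> xs - c \<bullet> x < L^2 * G / P"
      show "selects_n_smallest A b x U V"
        by (rule core[OF po dopt L0 GG0 U_def V_def Une hxU hsV hyV hrU hG du xf])
           (use gp in \<open>simp add: P_def\<close>)
    qed
    then show ?thesis using R by simp
  qed
  then show ?thesis unfolding Let_def lam_def gam_def P_def U_def V_def .
qed


end
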